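(* Let $n\ge2$ be even and define $Q:\mathbb{F}_{2^n}\to\mathbb{F}_2$ by $$Q(x)=\sum_{i=1}^{n/2-1}Tr_1^n\!\left(x^{2^i+1}\right)+Tr_1^{n/2}\!\left(x^{2^{n/2}+1}\right).$$ Let $f:\mathbb{F}_{2^n}\to\mathbb{F}_2$. Then (1) if $f$ is bent then $f+Q$ is negabent; (2) if $f$ is negabent then $f+Q$ is bent.
   Context: $Tr_1^m(z)=z+z^2+\dots+z^{2^{m-1}}$ (for $m\mid n$, a map $\mathbb{F}_{2^m}\to\mathbb{F}_2$; note $x^{2^{n/2}+1}\in\mathbb{F}_{2^{n/2}}$); write $Tr=Tr_1^n$. Fix a self-dual basis $\{\alpha_i\}$ of $\mathbb{F}_{2^n}$ over $\mathbb{F}_2$ ($Tr(\alpha_i\alpha_j)=\delta_{ij}$), identify $\mathbb{F}_{2^n}$ with $\mathbb{F}_2^n$ via coordinates, and let $wt(x)$ be the number of nonzero coordinates. For $g:\mathbb{F}_{2^n}\to\mathbb{F}_2$: $g$ is bent if $\left|\sum_x(-1)^{g(x)+Tr(\mu x)}\right|=2^{n/2}$ for all $\mu$; $g$ is negabent if $\left|\sum_x(-1)^{g(x)+Tr(\mu x)}\mathrm{i}^{wt(x)}\right|=2^{n/2}$ for all $\mu$ ($\mathrm{i}=\sqrt{-1}$). *)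

theory Defs
  imports Complex_Main
begin

text \<open>The field F_(2^n) is modelled as a finite field type 'a with CARD('a) = 2^n.
  Elements of F_2 are represented as bool (True = 1); for elements z of the prime
  subfield {0,1} of 'a, bitval z = (z \<noteq> 0).\<close>

definition tr :: "nat \<Rightarrow> 'a::field \<Rightarrow> 'a" where
  "tr m z = (\<Sum>k<m. z ^ (2 ^ k))"

definition bitval :: "'a::field \<Rightarrow> bool" where
  "bitval z = (z \<noteq> 0)"

definition self_dual_basis :: "nat \<Rightarrow> (nat \<Rightarrow> 'a::field) \<Rightarrow> bool" where
  "self_dual_basis n \<alpha> = (\<forall>i<n. \<forall>j<n. tr n (\<alpha> i * \<alpha> j) = (if i = j then 1 else 0))"

text \<open>Coordinates w.r.t. a self-dual basis are x_i = Tr(alpha_i x).\<close>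
definition wt :: "nat \<Rightarrow> (nat \<Rightarrow> 'a::field) \<Rightarrow> 'a \<Rightarrow> nat" where
  "wt n \<alpha> x = card {i. i < n \<and> tr n (\<alpha> i * x) \<noteq> 0}"

definition sgn2 :: "bool \<Rightarrow> complex" where
  "sgn2 b = (if b then -1 else 1)"

definition bent :: "nat \<Rightarrow> ('a::{field,finite} \<Rightarrow> bool) \<Rightarrow> bool" where
  "bent n g = (\<forall>\<mu>::'a. cmod (\<Sum>x\<in>UNIV. sgn2 (g x \<noteq> bitval (tr n (\<mu> * x))))
                 = 2 ^ (n div 2))"

definition negabent :: "nat \<Rightarrow> (nat \<Rightarrow> 'a::{field,finite}) \<Rightarrow> ('a \<Rightarrow> bool) \<Rightarrow> bool" where
  "negabent n \<alpha> g = (\<forall>\<mu>::'a. cmod (\<Sum>x\<in>UNIV. sgn2 (g x \<noteq> bitval (tr n (\<mu> * x)))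
                                      * \<i> ^ (wt n \<alpha> x))
                 = 2 ^ (n div 2))"

definition Qfun :: "nat \<Rightarrow> 'a::field \<Rightarrow> bool" where
  "Qfun n x = bitval ((\<Sum>i\<in>{1..<n div 2}. tr n (x ^ (2 ^ i + 1)))
                       + tr (n div 2) (x ^ (2 ^ (n div 2) + 1)))"

end

theory Submission
  imports Defs "HOL-Number_Theory.Residues"
begin

locale ff =
  fixes n :: nat and dummy :: "'a::{field,finite}"
  assumes card: "card (UNIV::'a set) = 2^n" and npos: "n \<ge> 1"
begin

lemma char2[simp]: "(2::'a) = 0"
proof -
  have p: "prime CHAR('a)"
    using prime_CHAR_semidom[where ?'a='a] finite_imp_CHAR_pos[where ?'a='a] by simp
  have "CHAR('a) dvd 2^n" using CHAR_dvd_CARD[where ?'a='a] card by simp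
  hence "CHAR('a) dvd 2" using p prime_dvd_power_nat by blast
  hence "CHAR('a) = 2" using p primes_dvd_imp_eq two_is_prime_nat by blast
  hence "of_nat 2 = (0::'a)" using of_nat_CHAR[where ?'a='a] by simp
  thus ?thesis by simp
qed

lemma add_self[simp]: "(x::'a) + x = 0"
proof -
  have "x + x = 2 * x" by simp
  thus ?thesis using char2 by simp
qed

lemma minus_eq_plus: "(x::'a) - y = x + y"
  by (metis add_self add_diff_cancel_right' diff_add_cancel add.assoc)

lemma fermat: "(x::'a) ^ (2^n) = x"
proof (cases "x = 0")
  case False
  have "x * (\<Prod>y\<in>UNIV-{0}. x * y) = x * x ^ (card (UNIV :: 'a set) - 1) * \<Prod>(UNIV-{0})"
    by (simp add: prod.distrib mult_ac)
  also have "x * x ^ (card (UNIV :: 'a set) - 1) = x ^ Suc (card (UNIV :: 'a set) - 1)"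
    by (subst power_Suc) auto
  also have "Suc (card (UNIV :: 'a set) - 1) = card (UNIV :: 'a set)"
    using finite_UNIV_card_ge_0[where ?'a = 'a] by simp
  also have "(\<Prod>y\<in>UNIV-{0}. x * y) = (\<Prod>y\<in>UNIV-{0}. y)"
    by (rule prod.reindex_bij_witness[of _ "\<lambda>y. y / x" "\<lambda>y. x * y"]) (use False in auto)
  finally show ?thesis using card
    by simp
qed (use npos in auto)

lemma sq_add: "((x::'a) + y)^2 = x^2 + y^2"
  by (simp add: power2_eq_square algebra_simps flip: mult_2)

lemma pow2_add: "((x::'a) + y)^(2^k) = x^(2^k) + y^(2^k)"
proof (induction k)
  case (Suc k)
  have "(x+y)^(2^Suc k) = ((x+y)^(2^k))^2" by (simp add: power_mult[symmetric] mult.commute)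
  also have "\<dots> = (x^(2^k))^2 + (y^(2^k))^2" using Suc sq_add by simp
  finally show ?case by (simp add: power_mult[symmetric] mult.commute)
qed simp

lemma pow2_sum: "finite A \<Longrightarrow> (\<Sum>i\<in>A. (f i::'a))^(2^k) = (\<Sum>i\<in>A. f i ^ (2^k))"
  by (induction A rule: finite_induct) (auto simp: pow2_add)

lemma sq_sum: "finite A \<Longrightarrow> (\<Sum>i\<in>A. (f i::'a))^2 = (\<Sum>i\<in>A. f i ^ 2)"
  using pow2_sum[of A f 1] by simp

definition idem :: "'a \<Rightarrow> bool" where "idem z \<longleftrightarrow> z^2 = z"

lemma idem_iff: "idem z \<longleftrightarrow> z = 0 \<or> z = 1"
proof -
  have "z^2 = z \<longleftrightarrow> z * (z - 1) = 0" by (simp add: power2_eq_square algebra_simps)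
  thus ?thesis unfolding idem_def by auto
qed

lemma idem_pow: "idem c \<Longrightarrow> c^(2^k) = c"
  by (auto simp: idem_iff)

lemma idem_add: "idem a \<Longrightarrow> idem b \<Longrightarrow> idem (a+b)"
  by (simp add: idem_def sq_add)

lemma idem_mult: "idem a \<Longrightarrow> idem b \<Longrightarrow> idem (a*b)"
  by (auto simp: idem_iff)

lemma idem_0[simp]: "idem 0" and idem_1[simp]: "idem 1" by (auto simp: idem_iff)

lemma idem_sum: "(\<And>i. i \<in> A \<Longrightarrow> idem (f i)) \<Longrightarrow> idem (\<Sum>i\<in>A. f i)"
  by (induction A rule: infinite_finite_induct) (auto simp: idem_add)

lemma tr_add: "tr k (x + y) = tr k x + tr k (y::'a)"
  by (simp add: tr_def pow2_add sum.distrib)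

lemma tr_0[simp]: "tr k (0::'a) = 0" by (simp add: tr_def power_0_left)

lemma tr_sum: "tr k (\<Sum>i\<in>A. (f i::'a)) = (\<Sum>i\<in>A. tr k (f i))"
  by (induction A rule: infinite_finite_induct) (auto simp: tr_add)

lemma tr_scal: "idem c \<Longrightarrow> tr k (c * z) = c * tr k (z::'a)"
  by (simp add: tr_def power_mult_distrib idem_pow sum_distrib_left)

lemma tr_sq: "tr k (z::'a) ^ 2 = tr k (z^2)"
  by (simp add: tr_def sq_sum power_mult[symmetric] mult.commute)

lemma tr_shift: "tr k ((z::'a)^2) = tr k z + z + z^(2^k)"
proof -
  have "tr k (z^2) = (\<Sum>i<k. z^(2^Suc i))"
    by (simp add: tr_def power_mult[symmetric] mult.commute)
  also have "\<dots> = (\<Sum>i<Suc k. z^(2^i)) - z"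
    by (subst sum.lessThan_Suc_shift) simp
  also have "\<dots> = tr k z + z^(2^k) - z" by (simp add: tr_def)
  finally show ?thesis by (simp add: minus_eq_plus algebra_simps)
qed

abbreviation T where "T \<equiv> tr n"

lemma T_sq: "T (z^2) = T (z::'a)"
  using tr_shift[of n z] fermat by simp

lemma T_idem: "idem (T (z::'a))"
  unfolding idem_def using tr_sq T_sq by simp

lemma T_pow: "T (z^(2^k)) = T (z::'a)"
proof (induction k)
  case (Suc k)
  have "z^(2^Suc k) = (z^(2^k))^2" by (simp add: power_mult[symmetric] mult.commute)
  thus ?case using Suc T_sq by simp
qed simp

lemma tr_fixed_idem: "w^(2^k) = (w::'a) \<Longrightarrow> idem (tr k w)"
  unfolding idem_def using tr_sq tr_shift[of k w] by simp

lemma sum01: "(\<And>i. i \<in> A \<Longrightarrow> idem (f i)) \<Longrightarrow> finite A \<Longrightarrow> sum f A = (of_nat (card {i\<in>A. f i \<noteq> 0}) :: 'a)"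
proof -
  assume h: "\<And>i. i \<in> A \<Longrightarrow> idem (f i)" and fin: "finite A"
  have "sum f A = sum f {i\<in>A. f i \<noteq> 0}"
    by (rule sum.mono_neutral_right) (use fin in auto)
  also have "\<dots> = sum (\<lambda>_. 1) {i\<in>A. f i \<noteq> 0}"
    by (rule sum.cong) (use h in \<open>auto simp: idem_iff\<close>)
  finally show ?thesis by simp
qed

lemma of_nat_char2: "(of_nat w :: 'a) = (if even w then 0 else 1)"
  by (induction w) auto

lemma bitval_of_nat: "bitval (of_nat w :: 'a) \<longleftrightarrow> odd w"
  by (simp add: of_nat_char2 bitval_def)

lemma bitval_add: "idem a \<Longrightarrow> idem b \<Longrightarrow> bitval (a + b) \<longleftrightarrow> (bitval a \<noteq> bitval (b::'a))"
  by (auto simp: idem_iff bitval_def)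

lemma tr_split: "tr (a + b) (z::'a) = tr a z + tr b (z^(2^a))"
proof (induction b)
  case (Suc b)
  have "z^(2^(a+b)) = (z^(2^a))^(2^b)" by (simp add: power_mult[symmetric] power_add)
  with Suc show ?case by (simp add: tr_def)
qed (simp add: tr_def)

lemma sum_square_split:
  fixes M :: "nat \<Rightarrow> nat \<Rightarrow> 'b::comm_monoid_add"
  shows "(\<Sum>i<N. \<Sum>j<N. M i j) = (\<Sum>i<N. M i i) + (\<Sum>j<N. \<Sum>i<j. M i j + M j i)"
proof (induction N)
  case (Suc N)
  have "(\<Sum>i<Suc N. \<Sum>j<Suc N. M i j) = (\<Sum>i<N. \<Sum>j<N. M i j) + (\<Sum>i<N. M i N) + (\<Sum>j<N. M N j) + M N N"
    by (simp add: sum.distrib algebra_simps)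
  also have "\<dots> = (\<Sum>i<Suc N. M i i) + (\<Sum>j<Suc N. \<Sum>i<j. M i j + M j i)"
    using Suc by (simp add: sum.distrib algebra_simps)
  finally show ?case .
qed simp

end

lemma sign_lemma:
  fixes t :: "nat \<Rightarrow> 'a::field"
  assumes c2: "(2::'a) = 0" and idm: "\<And>i. t i = 0 \<or> t i = 1"
  shows "\<i> ^ card {i. i < N \<and> t i \<noteq> 0}
     = sgn2 (bitval (\<Sum>j<N. \<Sum>i<j. t i * t j)) * (if even (card {i. i < N \<and> t i \<noteq> 0}) then 1 else \<i>)
     \<and> ((\<Sum>j<N. \<Sum>i<j. t i * t j) = 0 \<or> (\<Sum>j<N. \<Sum>i<j. t i * t j) = 1)
     \<and> (\<Sum>i<N. t i) = (if even (card {i. i < N \<and> t i \<noteq> 0}) then 0 else 1)"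
proof (induction N)
  case 0
  then show ?case by (simp add: sgn2_def bitval_def)
next
  case (Suc N)
  define w where "w = card {i. i < N \<and> t i \<noteq> 0}"
  define E where "E = (\<Sum>j<N. \<Sum>i<j. t i * t j)"
  have one_one: "(1::'a) + 1 = 0" using c2 by simp
  have IH: "\<i> ^ w = sgn2 (bitval E) * (if even w then 1 else \<i>)" "E = 0 \<or> E = 1"
     "(\<Sum>i<N. t i) = (if even w then 0 else 1)"
    using Suc unfolding w_def E_def by auto
  show ?case
  proof (cases "t N = 0")
    case True
    have "{i. i < Suc N \<and> t i \<noteq> 0} = {i. i < N \<and> t i \<noteq> 0}" using True less_Suc_eq by auto
    with True IH show ?thesis unfolding w_def E_def by (simp)
  next
    case False
    hence tN: "t N = 1" using idm by metis
    have "{i. i < Suc N \<and> t i \<noteq> 0} = insert N {i. i < N \<and> t i \<noteq> 0}" using False less_Suc_eq by auto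
    hence w': "card {i. i < Suc N \<and> t i \<noteq> 0} = Suc w" unfolding w_def by simp
    have E': "(\<Sum>j<Suc N. \<Sum>i<j. t i * t j) = E + (if even w then 0 else 1)"
      using tN IH(3) unfolding E_def by simp
    have S': "(\<Sum>i<Suc N. t i) = (if even w then 0 else 1) + 1" using IH(3) tN by simp
    show ?thesis unfolding w' E' S' using IH(1,2) one_one
      by (cases "even w"; cases "E = 0") (auto simp: sgn2_def bitval_def)
  qed
qed

locale sd = ff n dummy for n and dummy :: "'a::{field,finite}" +
  fixes \<alpha> :: "nat \<Rightarrow> 'a" and m :: nat
  assumes sdb: "self_dual_basis n \<alpha>" and nm: "n = 2*m"
begin

lemma sdb': "i < n \<Longrightarrow> j < n \<Longrightarrow> T (\<alpha> i * \<alpha> j) = (if i = j then 1 else 0)"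
  using sdb unfolding self_dual_basis_def by auto

lemma coord:
  assumes j: "j < n" and c: "\<And>i. i < n \<Longrightarrow> idem (c i)"
  shows "T (\<alpha> j * (\<Sum>i<n. c i * \<alpha> i)) = c j"
proof -
  have "T (\<alpha> j * (\<Sum>i<n. c i * \<alpha> i)) = (\<Sum>i<n. c i * T (\<alpha> j * \<alpha> i))"
    by (simp add: sum_distrib_left tr_sum c tr_scal[symmetric] mult.left_commute)
  also have "\<dots> = (\<Sum>i<n. if i = j then c j else 0)"
    by (rule sum.cong) (auto simp: sdb' j)
  finally show ?thesis using j by simp
qed

lemma recon: "x = (\<Sum>i<n. T (\<alpha> i * x) * \<alpha> i)"
proof -
  define C where "C = PiE {..<n} (\<lambda>_. {0,1::'a})"
  define \<psi> where "\<psi> c = (\<Sum>i<n. c i * \<alpha> i)" for c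
  have cardC: "card C = 2^n" unfolding C_def by (simp add: card_PiE numeral_2_eq_2)
  have inj: "inj_on \<psi> C"
  proof (rule inj_onI)
    fix c d assume cC: "c \<in> C" and dC: "d \<in> C" and eq: "\<psi> c = \<psi> d"
    have "c j = d j" if "j < n" for j
    proof -
      have "c j = T (\<alpha> j * \<psi> c)" unfolding \<psi>_def
        by (rule coord[symmetric]) (use that cC in \<open>auto simp: C_def idem_iff\<close>)
      also have "\<dots> = T (\<alpha> j * \<psi> d)" using eq by simp
      also have "\<dots> = d j" unfolding \<psi>_def
        by (rule coord) (use that dC in \<open>auto simp: C_def idem_iff\<close>)
      finally show ?thesis .
    qed
    thus "c = d" using cC dC unfolding C_def by (auto intro: PiE_ext)
  qed
  have "card (\<psi> ` C) = card (UNIV::'a set)" using card_image[OF inj] cardC card by simp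
  hence "\<psi> ` C = UNIV" by (simp add: card_subset_eq)
  then obtain c where cC: "c \<in> C" and xc: "x = \<psi> c" by (metis UNIV_I imageE)
  have "T (\<alpha> i * x) = c i" if "i < n" for i unfolding xc \<psi>_def
    by (rule coord) (use that cC in \<open>auto simp: C_def idem_iff\<close>)
  hence "(\<Sum>i<n. T (\<alpha> i * x) * \<alpha> i) = \<psi> c" unfolding \<psi>_def by simp
  thus ?thesis using xc by simp
qed

lemma T_alpha: "i < n \<Longrightarrow> T (\<alpha> i) = 1"
  using T_sq[of "\<alpha> i"] sdb'[of i i] by (simp add: power2_eq_square)

lemma bilin: "tr k (x * x^(2^r)) = (\<Sum>i<n. \<Sum>j<n. T (\<alpha> i * x) * T (\<alpha> j * x) * tr k (\<alpha> i * \<alpha> j^(2^r)))"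
proof -
  have x1: "x = (\<Sum>i<n. T (\<alpha> i * x) * \<alpha> i)" by (rule recon)
  have "x^(2^r) = (\<Sum>i<n. T (\<alpha> i * x) * \<alpha> i)^(2^r)"
    using arg_cong[OF x1, of "\<lambda>y. y^(2^r)"] .
  also have "\<dots> = (\<Sum>j<n. T (\<alpha> j * x) * \<alpha> j^(2^r))"
    by (simp add: pow2_sum power_mult_distrib idem_pow T_idem)
  finally have xr: "x^(2^r) = (\<Sum>j<n. T (\<alpha> j * x) * \<alpha> j^(2^r))" .
  have "x * x^(2^r) = (\<Sum>i<n. T (\<alpha> i * x) * \<alpha> i) * (\<Sum>j<n. T (\<alpha> j * x) * \<alpha> j^(2^r))"
    using x1 xr by metis
  also have "\<dots> = (\<Sum>i<n. \<Sum>j<n. (T (\<alpha> i * x) * T (\<alpha> j * x)) * (\<alpha> i * \<alpha> j^(2^r)))"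
    by (simp add: sum_product mult_ac)
  finally have "tr k (x * x^(2^r)) = tr k (\<Sum>i<n. \<Sum>j<n. (T (\<alpha> i * x) * T (\<alpha> j * x)) * (\<alpha> i * \<alpha> j^(2^r)))"
    by simp
  also have "\<dots> = (\<Sum>i<n. \<Sum>j<n. T (\<alpha> i * x) * T (\<alpha> j * x) * tr k (\<alpha> i * \<alpha> j^(2^r)))"
    by (simp add: tr_sum tr_scal idem_mult T_idem)
  finally show ?thesis .
qed

definition Qv :: "'a \<Rightarrow> 'a" where
  "Qv x = (\<Sum>d\<in>{1..<m}. T (x^(2^d+1))) + tr m (x^(2^m+1))"

definition D :: "nat \<Rightarrow> nat \<Rightarrow> 'a" where
  "D i j = (\<Sum>d\<in>{1..<m}. T (\<alpha> i * \<alpha> j^(2^d))) + tr m (\<alpha> i * \<alpha> j^(2^m))"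

lemma Qfun_eq: "Qfun n x = bitval (Qv x)"
proof -
  have "n div 2 = m" using nm by simp
  thus ?thesis unfolding Qfun_def Qv_def by (simp only:)
qed

lemma pow_p1: "(x::'a)^(2^d+1) = x * x^(2^d)" by (simp add: power_add mult.commute)

lemma Qv_D: "Qv x = (\<Sum>i<n. \<Sum>j<n. T (\<alpha> i * x) * T (\<alpha> j * x) * D i j)"
proof -
  have "Qv x = (\<Sum>d\<in>{1..<m}. \<Sum>i<n. \<Sum>j<n. T (\<alpha> i * x) * T (\<alpha> j * x) * T (\<alpha> i * \<alpha> j^(2^d)))
     + (\<Sum>i<n. \<Sum>j<n. T (\<alpha> i * x) * T (\<alpha> j * x) * tr m (\<alpha> i * \<alpha> j^(2^m)))"
    unfolding Qv_def pow_p1 bilin ..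
  also have "(\<Sum>d\<in>{1..<m}. \<Sum>i<n. \<Sum>j<n. T (\<alpha> i * x) * T (\<alpha> j * x) * T (\<alpha> i * \<alpha> j^(2^d)))
     = (\<Sum>i<n. \<Sum>j<n. T (\<alpha> i * x) * T (\<alpha> j * x) * (\<Sum>d\<in>{1..<m}. T (\<alpha> i * \<alpha> j^(2^d))))"
  proof -
    have "(\<Sum>d\<in>{1..<m}. \<Sum>i<n. \<Sum>j<n. T (\<alpha> i * x) * T (\<alpha> j * x) * T (\<alpha> i * \<alpha> j^(2^d)))
      = (\<Sum>i<n. \<Sum>d\<in>{1..<m}. \<Sum>j<n. T (\<alpha> i * x) * T (\<alpha> j * x) * T (\<alpha> i * \<alpha> j^(2^d)))"
      by (rule sum.swap)
    also have "\<dots> = (\<Sum>i<n. \<Sum>j<n. \<Sum>d\<in>{1..<m}. T (\<alpha> i * x) * T (\<alpha> j * x) * T (\<alpha> i * \<alpha> j^(2^d)))"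
      by (rule sum.cong[OF refl], rule sum.swap)
    finally show ?thesis by (simp add: sum_distrib_left)
  qed
  finally show ?thesis by (simp add: D_def sum.distrib[symmetric] distrib_left)
qed

lemma Dsym:
  assumes i: "i < n" and j: "j < n" and ij: "i \<noteq> j"
  shows "D i j + D j i = 1"
proof -
  define a where "a = \<alpha> i"
  define b where "b = \<alpha> j"
  define f where "f d = T (a * b^(2^d))" for d
  have Ta: "T a = 1" and Tb: "T b = 1" using T_alpha i j by (auto simp: a_def b_def)
  have Tab: "T (a * b) = 0" using sdb' i j ij by (simp add: a_def b_def)
  have s1: "(\<Sum>d<n. f d) = 1"
  proof -
    have "(\<Sum>d<n. f d) = T (\<Sum>d<n. a * b^(2^d))" unfolding f_def by (simp add: tr_sum)
    also have "\<dots> = T (a * T b)" by (simp add: tr_def[of n b] sum_distrib_left)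
    also have "\<dots> = T (T b * a)" by (simp add: mult.commute)
    also have "\<dots> = 1" using tr_scal[of "T b" n a] T_idem[of b] Ta Tb by simp
    finally show ?thesis .
  qed
  have s2: "(\<Sum>d\<in>{1..<n}. f d) = 1"
  proof -
    have "(\<Sum>d<n. f d) = f 0 + (\<Sum>d\<in>{1..<n}. f d)"
      using npos by (simp add: lessThan_atLeast0 sum.atLeast_Suc_lessThan)
    thus ?thesis using s1 Tab by (simp add: f_def)
  qed
  have m1: "m \<ge> 1" using npos nm by simp
  have s3: "(\<Sum>d\<in>{1..<n}. f d) = (\<Sum>d\<in>{1..<m}. f d) + f m + (\<Sum>d\<in>{Suc m..<n}. f d)"
  proof -
    have "(\<Sum>d\<in>{1..<n}. f d) = (\<Sum>d\<in>{1..<m}. f d) + (\<Sum>d\<in>{m..<n}. f d)"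
      using m1 nm by (simp add: sum.atLeastLessThan_concat)
    also have "(\<Sum>d\<in>{m..<n}. f d) = f m + (\<Sum>d\<in>{Suc m..<n}. f d)"
      using m1 nm by (simp add: sum.atLeast_Suc_lessThan)
    finally show ?thesis by (simp add: add.assoc)
  qed
  have s4: "(\<Sum>d\<in>{Suc m..<n}. f d) = (\<Sum>d\<in>{1..<m}. f (n - d))"
    by (rule sum.reindex_bij_witness[of _ "\<lambda>d. n - d" "\<lambda>d. n - d"]) (use nm in auto)
  have s5: "T (b * a^(2^d)) = f (n - d)" if "d \<le> n" for d
  proof -
    have "T (b * a^(2^d)) = T ((b * a^(2^d))^(2^(n-d)))" by (rule T_pow[symmetric])
    also have "(b * a^(2^d))^(2^(n-d)) = b^(2^(n-d)) * a^(2^d * 2^(n-d))"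
      by (simp add: power_mult_distrib power_mult)
    also have "2^d * 2^(n-d) = (2::nat)^n" using that by (simp add: power_add[symmetric])
    finally show ?thesis by (simp add: fermat f_def mult.commute)
  qed
  have s6: "tr m (a * b^(2^m)) + tr m (b * a^(2^m)) = f m"
  proof -
    have "f m = tr (m+m) (a * b^(2^m))" using nm by (simp add: f_def mult_2)
    also have "\<dots> = tr m (a * b^(2^m)) + tr m ((a * b^(2^m))^(2^m))" by (rule tr_split)
    also have "(a * b^(2^m))^(2^m) = a^(2^m) * b^(2^m * 2^m)"
      by (simp add: power_mult_distrib power_mult)
    also have "2^m * 2^m = (2::nat)^n" using nm by (simp add: power_add[symmetric] mult_2)
    finally show ?thesis by (simp add: fermat mult.commute)
  qed
  have "D i j + D j i = (\<Sum>d\<in>{1..<m}. f d) + (\<Sum>d\<in>{1..<m}. T (b * a^(2^d))) + (tr m (a * b^(2^m)) + tr m (b * a^(2^m)))"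
    unfolding D_def f_def a_def b_def by (simp add: algebra_simps)
  also have "(\<Sum>d\<in>{1..<m}. T (b * a^(2^d))) = (\<Sum>d\<in>{1..<m}. f (n - d))"
    by (rule sum.cong) (use s5 nm in auto)
  finally show ?thesis using s2 s3 s4 s6 by (simp add: algebra_simps)
qed

lemma Ddiag: "idem (D i i)"
proof -
  have "(\<alpha> i * \<alpha> i ^ 2 ^ m) ^ 2 ^ m = \<alpha> i * \<alpha> i ^ 2 ^ m"
  proof -
    have "(\<alpha> i * \<alpha> i ^ 2 ^ m) ^ 2 ^ m = \<alpha> i ^ 2 ^ m * \<alpha> i ^ (2 ^ m * 2^m)"
      by (simp add: power_mult_distrib power_mult)
    also have "2^m * 2^m = (2::nat)^n" using nm by (simp add: power_add[symmetric] mult_2)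
    finally show ?thesis by (simp add: fermat mult.commute)
  qed
  thus ?thesis unfolding D_def
    by (intro idem_add idem_sum T_idem tr_fixed_idem)
qed

end
context sd begin
definition lam :: 'a where "lam = (\<Sum>i<n. D i i * \<alpha> i)"
definition e :: 'a where "e = (\<Sum>i<n. \<alpha> i)"

lemma Qv_split: "Qv x = (\<Sum>j<n. \<Sum>i<j. T (\<alpha> i * x) * T (\<alpha> j * x)) + T (lam * x)"
proof -
  have "Qv x = (\<Sum>i<n. T (\<alpha> i * x) * T (\<alpha> i * x) * D i i)
     + (\<Sum>j<n. \<Sum>i<j. T (\<alpha> i * x) * T (\<alpha> j * x) * D i j + T (\<alpha> j * x) * T (\<alpha> i * x) * D j i)"
    unfolding Qv_D by (rule sum_square_split)
  also have "(\<Sum>i<n. T (\<alpha> i * x) * T (\<alpha> i * x) * D i i) = (\<Sum>i<n. D i i * T (\<alpha> i * x))"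
    by (rule sum.cong) (use T_idem in \<open>auto simp: idem_def power2_eq_square\<close>)
  also have "\<dots> = T (lam * x)"
    unfolding lam_def by (simp add: sum_distrib_right tr_sum tr_scal Ddiag mult.assoc)
  also have "(\<Sum>j<n. \<Sum>i<j. T (\<alpha> i * x) * T (\<alpha> j * x) * D i j + T (\<alpha> j * x) * T (\<alpha> i * x) * D j i)
     = (\<Sum>j<n. \<Sum>i<j. T (\<alpha> i * x) * T (\<alpha> j * x))"
  proof (rule sum.cong[OF refl], rule sum.cong[OF refl])
    fix i j assume "j \<in> {..<n}" "i \<in> {..<j}"
    hence "D i j + D j i = 1" by (intro Dsym) auto
    show "T (\<alpha> i * x) * T (\<alpha> j * x) * D i j + T (\<alpha> j * x) * T (\<alpha> i * x) * D j i = T (\<alpha> i * x) * T (\<alpha> j * x)"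
    proof -
      have "T (\<alpha> i * x) * T (\<alpha> j * x) * D i j + T (\<alpha> j * x) * T (\<alpha> i * x) * D j i
        = T (\<alpha> i * x) * T (\<alpha> j * x) * (D i j + D j i)" by (simp add: algebra_simps)
      thus ?thesis using \<open>D i j + D j i = 1\<close> by simp
    qed
  qed
  finally show ?thesis by (simp add: add.commute)
qed

lemma wt_parity: "T (e * x) = of_nat (wt n \<alpha> x)"
proof -
  have "T (e * x) = (\<Sum>i<n. T (\<alpha> i * x))" unfolding e_def by (simp add: sum_distrib_right tr_sum)
  also have "\<dots> = of_nat (card {i\<in>{..<n}. T (\<alpha> i * x) \<noteq> 0})" by (rule sum01) (auto simp: T_idem)
  finally show ?thesis unfolding wt_def by simp
qed

end
lemma bool_id:
  fixes h bm q bl be :: bool and A B :: complex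
  shows "sgn2 (h \<noteq> bm) * sgn2 (q \<noteq> bl) * (A + B * sgn2 be)
   = A * sgn2 ((h \<noteq> q) \<noteq> (bm \<noteq> bl)) + B * sgn2 ((h \<noteq> q) \<noteq> ((bm \<noteq> bl) \<noteq> be))"
  by (cases h; cases q; cases bm; cases bl; cases be) (simp_all add: sgn2_def algebra_simps)
context sd begin
lemma key: "\<i> ^ (wt n \<alpha> x) = sgn2 (Qfun n x \<noteq> bitval (T (lam * x)))
   * ((1 + \<i>)/2 + (1 - \<i>)/2 * sgn2 (bitval (T (e * x))))"
proof -
  define E where "E = (\<Sum>j<n. \<Sum>i<j. T (\<alpha> i * x) * T (\<alpha> j * x))"
  have idm: "\<And>i. T (\<alpha> i * x) = 0 \<or> T (\<alpha> i * x) = 1" using T_idem idem_iff by blast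
  note SL = sign_lemma[of "\<lambda>i. T (\<alpha> i * x)" n, OF char2 idm]
  have S: "\<i> ^ wt n \<alpha> x = sgn2 (bitval E) * (if even (wt n \<alpha> x) then 1 else \<i>)" "E = 0 \<or> E = 1"
    using SL[folded wt_def E_def] by blast+
  have QE: "Qv x = E + T (lam * x)" unfolding Qv_split E_def ..
  have iE: "idem E" using S(2) idem_iff by blast
  have "Qfun n x = (bitval E \<noteq> bitval (T (lam * x)))"
    unfolding Qfun_eq QE by (rule bitval_add[OF iE T_idem])
  moreover have "bitval (T (e * x)) = odd (wt n \<alpha> x)" by (simp add: wt_parity bitval_of_nat)
  ultimately show ?thesis using S(1)
    by (cases "bitval E"; cases "even (wt n \<alpha> x)") (simp_all add: sgn2_def field_simps)
qed

definition W :: "('a \<Rightarrow> bool) \<Rightarrow> 'a \<Rightarrow> complex" where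
  "W g \<nu> = (\<Sum>x\<in>UNIV. sgn2 (g x \<noteq> bitval (T (\<nu> * x))))"

definition Wi :: "('a \<Rightarrow> bool) \<Rightarrow> 'a \<Rightarrow> int" where
  "Wi g \<nu> = (\<Sum>x\<in>UNIV. if g x \<noteq> bitval (T (\<nu> * x)) then -1 else 1)"

lemma W_Wi: "W g \<nu> = of_int (Wi g \<nu>)"
  unfolding W_def Wi_def of_int_sum by (rule sum.cong) (simp_all add: sgn2_def)

lemma bit_mu: "bitval (T ((\<mu> + \<nu>) * (x::'a))) = (bitval (T (\<mu> * x)) \<noteq> bitval (T (\<nu> * x)))"
proof -
  have "T ((\<mu> + \<nu>) * x) = T (\<mu> * x) + T (\<nu> * x)" by (metis distrib_right tr_add)
  thus ?thesis using bitval_add T_idem by metis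
qed


lemma nega_expand:
  "(\<Sum>x\<in>UNIV. sgn2 (h x \<noteq> bitval (T (\<mu> * x))) * \<i> ^ (wt n \<alpha> x))
   = (1 + \<i>)/2 * W (\<lambda>x. h x \<noteq> Qfun n x) (\<mu> + lam) + (1 - \<i>)/2 * W (\<lambda>x. h x \<noteq> Qfun n x) (\<mu> + lam + e)"
proof -
  have pt: "sgn2 (h x \<noteq> bitval (T (\<mu> * x))) * \<i> ^ (wt n \<alpha> x)
     = (1 + \<i>)/2 * sgn2 ((h x \<noteq> Qfun n x) \<noteq> bitval (T ((\<mu> + lam) * x)))
       + (1 - \<i>)/2 * sgn2 ((h x \<noteq> Qfun n x) \<noteq> bitval (T ((\<mu> + lam + e) * x)))" for x
  proof -
    have "sgn2 (h x \<noteq> bitval (T (\<mu> * x))) * \<i> ^ (wt n \<alpha> x)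
      = sgn2 (h x \<noteq> bitval (T (\<mu> * x))) * sgn2 (Qfun n x \<noteq> bitval (T (lam * x)))
        * ((1 + \<i>)/2 + (1 - \<i>)/2 * sgn2 (bitval (T (e * x))))"
      by (subst key) (simp only: mult.assoc)
    also have "\<dots> = (1 + \<i>)/2 * sgn2 ((h x \<noteq> Qfun n x) \<noteq> (bitval (T (\<mu> * x)) \<noteq> bitval (T (lam * x))))
       + (1 - \<i>)/2 * sgn2 ((h x \<noteq> Qfun n x) \<noteq> ((bitval (T (\<mu> * x)) \<noteq> bitval (T (lam * x))) \<noteq> bitval (T (e * x))))"
      by (rule bool_id)
    finally show ?thesis by (simp only: bit_mu)
  qed
  show ?thesis unfolding W_def pt by (simp only: sum.distrib sum_distrib_left)
qed

end

lemma cmod_comb: "(cmod ((1 + \<i>)/2 * of_int a + (1 - \<i>)/2 * of_int b))^2 = (real_of_int a ^ 2 + real_of_int b ^ 2) / 2"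
proof -
  have "(1 + \<i>)/2 * of_int a + (1 - \<i>)/2 * of_int b = Complex ((a + b)/2) ((a - b)/2)"
    by (simp add: complex_eq_iff)
  hence "(cmod ((1 + \<i>)/2 * of_int a + (1 - \<i>)/2 * of_int b))^2 = ((a + b)/2)^2 + ((a - b)/2)^2"
    by (simp only: cmod_power2 complex.sel)
  thus ?thesis by (simp add: power2_eq_square field_simps)
qed

lemma odd_sq: "odd (a::int) \<Longrightarrow> a^2 mod 4 = 1"
proof -
  assume "odd a" then obtain c where "a = 2*c+1" by (metis oddE)
  hence "a^2 = 4*(c^2+c) + 1" by (simp add: power2_eq_square algebra_simps)
  moreover have "(4*k+1) mod 4 = (1::int)" for k by presburger
  ultimately show ?thesis by metis
qed

lemma two_squares: "(a::int)^2 + b^2 = 2 * 4^k \<Longrightarrow> a^2 = 4^k"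
proof (induction k arbitrary: a b)
  case 0
  hence s: "a^2 + b^2 = 2" by simp
  have nb: "c^2 \<noteq> 2" for c :: int
  proof
    assume c: "c^2 = 2"
    show False
    proof (cases "\<bar>c\<bar> \<le> 1")
      case True
      hence "c^2 \<le> 1" by (metis abs_le_square_iff abs_one power_one)
      thus False using c by simp
    next
      case False
      hence "2^2 \<le> \<bar>c\<bar>^2" by (intro power_mono) auto
      thus False using c by simp
    qed
  qed
  have "a^2 \<ge> 0" "b^2 \<ge> 0" by auto
  have "a^2 \<le> 2" using s \<open>b^2 \<ge> 0\<close> by linarith
  moreover have "a^2 \<noteq> 0"
  proof
    assume "a^2 = 0" thus False using s nb[of b] by simp
  qed
  moreover have "a^2 \<noteq> 2" using nb by blast
  ultimately have "a^2 = 1" using \<open>a^2 \<ge> 0\<close> by linarith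
  thus ?case by simp
next
  case (Suc k)
  have m4: "(a^2 + b^2) mod 4 = 0" using Suc.prems by simp
  have ea: "even a"
  proof (rule ccontr)
    assume oa: "\<not> even a"
    show False
    proof (cases "even b")
      case True
      then obtain c where "b = 2*c" by blast
      hence "b^2 mod 4 = 0" by (simp add: power2_eq_square)
      thus False using m4 odd_sq[of a] oa by (simp add: mod_add_eq[symmetric])
    next
      case False
      thus False using m4 odd_sq[of a] odd_sq[of b] oa by (simp add: mod_add_eq[symmetric])
    qed
  qed
  have eb: "even b"
  proof (rule ccontr)
    assume ob: "\<not> even b"
    then obtain c where "a = 2*c" using ea by blast
    hence "a^2 mod 4 = 0" by (simp add: power2_eq_square)
    thus False using m4 odd_sq[of b] ob by (simp add: mod_add_eq[symmetric])
  qed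
  obtain a' b' where ab: "a = 2*a'" "b = 2*b'" using ea eb by blast
  hence "4 * (a'^2 + b'^2) = 4 * (2 * 4^k)" using Suc.prems by (simp add: power2_eq_square algebra_simps)
  hence "a'^2 + b'^2 = 2 * 4^k" by simp
  hence "a'^2 = 4^k" by (rule Suc.IH)
  thus ?case using ab by (simp add: power2_eq_square algebra_simps)
qed


lemma sq_eq_pow: "x \<ge> 0 \<Longrightarrow> (x::real)^2 = (2^m)^2 \<Longrightarrow> x = 2^m"
  by (simp add: power2_eq_iff_nonneg)

theorem theorem7:
  fixes n :: nat and \<alpha> :: "nat \<Rightarrow> 'a::{field,finite}" and f :: "'a \<Rightarrow> bool"
  assumes "even n" and "n \<ge> 2" and "card (UNIV :: 'a set) = 2 ^ n"
    and "self_dual_basis n \<alpha>"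
  shows "(bent n f \<longrightarrow> negabent n \<alpha> (\<lambda>x. f x \<noteq> Qfun n x))
       \<and> (negabent n \<alpha> f \<longrightarrow> bent n (\<lambda>x. f x \<noteq> Qfun n x))"
proof -
  obtain m where nm: "n = 2*m" using assms(1) by blast
  interpret sd n "undefined::'a" \<alpha> m
    by unfold_locales (use assms nm in auto)
  have nd: "n div 2 = m" using nm by simp
  have bentW: "bent n g \<longleftrightarrow> (\<forall>\<nu>. cmod (W g \<nu>) = 2^m)" for g
    unfolding bent_def W_def nd ..
  have negaW: "negabent n \<alpha> g \<longleftrightarrow> (\<forall>\<mu>. cmod (\<Sum>x\<in>UNIV. sgn2 (g x \<noteq> bitval (T (\<mu> * x))) * \<i> ^ (wt n \<alpha> x)) = 2^m)" for g
    unfolding negabent_def nd ..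
  have cW: "cmod (W g \<nu>) = \<bar>real_of_int (Wi g \<nu>)\<bar>" for g \<nu>
    by (simp add: W_Wi)
  have part1: "negabent n \<alpha> (\<lambda>x. f x \<noteq> Qfun n x)" if bf: "bent n f"
    unfolding negaW
  proof
    fix \<mu>
    have ff: "(\<lambda>x. (f x \<noteq> Qfun n x) \<noteq> Qfun n x) = f" by auto
    define a where "a = Wi f (\<mu> + lam)"
    define b where "b = Wi f (\<mu> + lam + e)"
    have S: "(\<Sum>x\<in>UNIV. sgn2 ((f x \<noteq> Qfun n x) \<noteq> bitval (T (\<mu> * x))) * \<i> ^ (wt n \<alpha> x))
       = (1 + \<i>)/2 * of_int a + (1 - \<i>)/2 * of_int b"
      using nega_expand[of "\<lambda>x. f x \<noteq> Qfun n x" \<mu>] unfolding ff a_def b_def W_Wi by simp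
    have "\<bar>real_of_int a\<bar> = 2^m" "\<bar>real_of_int b\<bar> = 2^m"
      using bf unfolding bentW cW a_def b_def by auto
    hence "real_of_int a ^ 2 = (2^m)^2" "real_of_int b ^ 2 = (2^m)^2"
      by (metis power2_abs)+
    hence "(cmod ((1 + \<i>)/2 * of_int a + (1 - \<i>)/2 * of_int b))^2 = (2^m)^2"
      unfolding cmod_comb by simp
    thus "cmod (\<Sum>x\<in>UNIV. sgn2 ((f x \<noteq> Qfun n x) \<noteq> bitval (T (\<mu> * x))) * \<i> ^ (wt n \<alpha> x)) = 2^m"
      unfolding S by (intro sq_eq_pow) auto
  qed
  have part2: "bent n (\<lambda>x. f x \<noteq> Qfun n x)" if nf: "negabent n \<alpha> f"
    unfolding bentW
  proof
    fix \<nu>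
    define \<mu> where "\<mu> = \<nu> + lam"
    have mu1: "\<mu> + lam = \<nu>" unfolding \<mu>_def by (simp add: add.assoc)
    define a where "a = Wi (\<lambda>x. f x \<noteq> Qfun n x) \<nu>"
    define b where "b = Wi (\<lambda>x. f x \<noteq> Qfun n x) (\<nu> + e)"
    have S: "(\<Sum>x\<in>UNIV. sgn2 (f x \<noteq> bitval (T (\<mu> * x))) * \<i> ^ (wt n \<alpha> x))
       = (1 + \<i>)/2 * of_int a + (1 - \<i>)/2 * of_int b"
      using nega_expand[of f \<mu>] unfolding mu1 a_def b_def W_Wi by simp
    have "cmod ((1 + \<i>)/2 * of_int a + (1 - \<i>)/2 * of_int b) = 2^m"
      using nf unfolding negaW S[symmetric] by blast
    hence "(real_of_int a ^ 2 + real_of_int b ^ 2) / 2 = (2^m)^2"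
      using cmod_comb[of a b] by simp
    moreover have p4: "(2::real)^(m*2) = 4^m"
    proof -
      have "(2::real)^(m*2) = (2^2)^m" by (simp only: power_mult[symmetric] mult.commute)
      thus ?thesis by simp
    qed
    ultimately have "real_of_int (a ^ 2 + b ^ 2) = real_of_int (2 * 4^m)"
      by (simp add: power_mult_distrib[symmetric] power_mult[symmetric] mult.commute)
    hence "a^2 + b^2 = 2 * 4^m" by (simp only: of_int_eq_iff)
    hence "a^2 = 4^m" by (rule two_squares)
    hence "real_of_int a ^ 2 = real_of_int (4^m)" by (metis of_int_power)
    also have "\<dots> = 4^m" by simp
    also have "\<dots> = (2^m)^2" by (simp add: p4[symmetric] power_mult)
    finally have "real_of_int a ^ 2 = (2^m)^2" .
    hence "\<bar>real_of_int a\<bar> = 2^m" by (intro sq_eq_pow) auto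
    thus "cmod (W (\<lambda>x. f x \<noteq> Qfun n x) \<nu>) = 2^m" unfolding cW a_def .
  qed
  show ?thesis using part1 part2 by blast
qed

end
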